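(* Let $n$ be a positive integer and let $a,b$ be distinct integers with $0<a,b<n$, so that $G=C_{2n}(a,b,n)$ is a $5$-regular circulant graph. Suppose there exists a generator $g$ of the cyclic group $(\mathbb{Z}_{2n},+)$ such that, writing $a=p\cdot g$ and $b=q\cdot g$ with $p,q\in\{0,1,\dots,2n-1\}$ (i.e. $pg\equiv a$ and $qg\equiv b \pmod{2n}$), the number $r=\min\{p,q,2n-p,2n-q\}$ satisfies $r\geq \lceil \tfrac{2n}{3}\rceil$. Then $G$ is word-representable.
   Context: Two distinct letters $x,y$ alternate in a word $w$ if, after deleting all other letters from $w$, the resulting word is of the form $xyxy\cdots$ or $yxyx\cdots$ (of even or odd length). A graph $G=(V,E)$ is word-representable if there is a word $w$ over the alphabet $V$, containing every letter of $V$ at least once, such that for all distinct $x,y\in V$, $xy\in E$ if and only if $x$ and $y$ alternate in $w$. For an integer $m$ and a set $R$ of positive integers each at most $m/2$, the circulant graph $C_m(R)$ has vertex set $\{0,1,\dots,m-1\}$, with $i$ and $j$ adjacent iff $\min(|i-j|,\,m-|i-j|)\in R$. $C_{2n}(a,b,n)$ denotes the circulant graph on $2n$ vertices with jump set $\{a,b,n\}$. For an integer $k$ and $g\in\mathbb{Z}_{2n}$, $k\cdot g$ denotes the $k$-fold sum of $g$ in $\mathbb{Z}_{2n}$. *)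

theory Defs
  imports Complex_Main "HOL-Number_Theory.Cong"
begin

definition alternate :: "'a list \<Rightarrow> 'a \<Rightarrow> 'a \<Rightarrow> bool" where
  "alternate w x y \<longleftrightarrow>
     (let u = filter (\<lambda>c. c = x \<or> c = y) w in
      \<forall>i. Suc i < length u \<longrightarrow> u ! i \<noteq> u ! Suc i)"

definition word_representable :: "'a set \<Rightarrow> ('a \<Rightarrow> 'a \<Rightarrow> bool) \<Rightarrow> bool" where
  "word_representable V E \<longleftrightarrow>
     (\<exists>w. set w = V \<and>
          (\<forall>x\<in>V. \<forall>y\<in>V. x \<noteq> y \<longrightarrow> (E x y \<longleftrightarrow> alternate w x y)))"

definition circ_vertices :: "nat \<Rightarrow> nat set" where
  "circ_vertices m = {0..<m}"

definition circ_adj :: "nat \<Rightarrow> nat set \<Rightarrow> nat \<Rightarrow> nat \<Rightarrow> bool" where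
  "circ_adj m R i j \<longleftrightarrow>
     (let d = nat \<bar>int i - int j\<bar> in min d (m - d) \<in> R)"

end

theory Submission
  imports Defs
begin


definition piece :: "nat \<Rightarrow> (nat \<Rightarrow> real) \<Rightarrow> (nat \<Rightarrow> real) \<Rightarrow> nat list" where
  "piece N f1 f2 = map fst (sort_key snd (map (\<lambda>v. (v, f1 v)) [0..<N] @ map (\<lambda>v. (v, f2 v)) [0..<N]))"

lemma filter_upt2_gen:
  assumes "u < v"
  shows "filter (\<lambda>c. c = u \<or> c = v) [0..<N] = (if u < N then [u] else []) @ (if v < N then [v] else [])"
  using assms by (induction N) auto

lemma filter_upt2:
  assumes "u < v" "v < N"
  shows "filter (\<lambda>c. c = u \<or> c = v) [0..<N] = [u, v]"
  using filter_upt2_gen[OF assms(1), of N] assms by auto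

lemma filter_piece:
  assumes "u < v" "v < N"
  shows "filter (\<lambda>c. c = u \<or> c = v) (piece N f1 f2) =
         map fst (sort_key snd [(u, f1 u), (v, f1 v), (u, f2 u), (v, f2 v)])"
proof -
  have "filter (\<lambda>c. c = u \<or> c = v) (piece N f1 f2) =
    map fst (filter (\<lambda>p. fst p = u \<or> fst p = v) (sort_key snd (map (\<lambda>v. (v, f1 v)) [0..<N] @ map (\<lambda>v. (v, f2 v)) [0..<N])))"
    unfolding piece_def by (simp add: filter_map comp_def)
  also have "\<dots> = map fst (sort_key snd (filter (\<lambda>p. fst p = u \<or> fst p = v) (map (\<lambda>v. (v, f1 v)) [0..<N] @ map (\<lambda>v. (v, f2 v)) [0..<N])))"
    by (simp add: filter_sort)
  also have "filter (\<lambda>p. fst p = u \<or> fst p = v) (map (\<lambda>v. (v, f1 v)) [0..<N] @ map (\<lambda>v. (v, f2 v)) [0..<N])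
     = map (\<lambda>v. (v, f1 v)) (filter (\<lambda>c. c = u \<or> c = v) [0..<N]) @ map (\<lambda>v. (v, f2 v)) (filter (\<lambda>c. c = u \<or> c = v) [0..<N])"
    by (simp add: filter_map comp_def)
  finally show ?thesis using filter_upt2[OF assms] by simp
qed

lemma sort_interleave:
  assumes "a1 < b1" "b1 < a2" "a2 < b2"
  shows "map fst (sort_key snd [(u, a1::real), (v, b1), (u, a2), (v, b2)]) = [u,v,u,v]"
  using assms by simp

lemma sort_interleave':
  assumes "b1 < a1" "a1 < b2" "b2 < a2"
  shows "map fst (sort_key snd [(u, a1::real), (v, b1), (u, a2), (v, b2)]) = [v,u,v,u]"
  using assms by simp

lemma sort_gen:
  assumes "a1 < a2" "b1 < b2" "a1 \<noteq> b1" "a1 \<noteq> b2" "a2 \<noteq> b1" "a2 \<noteq> b2"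
  shows "map fst (sort_key snd [(u, a1::real), (v, b1), (u, a2), (v, b2)]) \<in>
    {[u,v,u,v],[v,u,v,u],[u,u,v,v],[v,v,u,u],[u,v,v,u],[v,u,u,v]}"
  using assms by (auto simp: not_less)




definition rk :: "nat \<Rightarrow> (nat \<Rightarrow> nat) \<Rightarrow> nat \<Rightarrow> real" where
  "rk N col v = real (col v) * real N + real v"

definition Sp :: "(nat \<Rightarrow> nat \<Rightarrow> bool) \<Rightarrow> (nat \<Rightarrow> nat) \<Rightarrow> nat \<Rightarrow> nat \<Rightarrow> bool" where
  "Sp E col x y \<longleftrightarrow> x \<noteq> y \<and> \<not> E x y \<and> col x \<le> col y"

definition k1 :: "nat \<Rightarrow> (nat \<Rightarrow> nat \<Rightarrow> bool) \<Rightarrow> (nat \<Rightarrow> nat) \<Rightarrow> nat \<Rightarrow> nat \<Rightarrow> nat \<Rightarrow> real" where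
  "k1 N E col x y v =
    (if Sp E col x y \<and> v = x then
       (if col x = col y then real (col x) * real N - 1/2
        else if col y = Suc (col x) then real (Suc (col x)) * real N - 1/4 else rk N col x)
     else if Sp E col x y \<and> v = y then
       (if col x = col y then rk N col y
        else if col y = Suc (col x) then real (Suc (col x)) * real N - 1/2 else 3 * real N - 1/2)
     else rk N col v)"

definition k2 :: "nat \<Rightarrow> (nat \<Rightarrow> nat \<Rightarrow> bool) \<Rightarrow> (nat \<Rightarrow> nat) \<Rightarrow> nat \<Rightarrow> nat \<Rightarrow> nat \<Rightarrow> real" where
  "k2 N E col x y v =
    (if Sp E col x y \<and> v = x then
       (if col x = col y then 3 * real N + real (Suc (col x)) * real N - 1/2
        else if col y = Suc (col x) then 3 * real N + real (col x) * real N - 1/4 else 3 * real N - 3/4)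
     else if Sp E col x y \<and> v = y then
       (if col x = col y then 3 * real N + rk N col y
        else if col y = Suc (col x) then 3 * real N + real (Suc (Suc (col x))) * real N - 1/2
        else 3 * real N + rk N col y)
     else 3 * real N + rk N col v)"

lemma col_cases: "(c::nat) \<le> 2 \<Longrightarrow> c = 0 \<or> c = 1 \<or> c = 2" by auto

lemma claimA:
  assumes sym: "\<And>x y. E x y \<Longrightarrow> E y x"
    and c2: "\<And>v. v < N \<Longrightarrow> col v \<le> 2"
    and "u < N" "v < N" "x < N" "y < N" "E u v" "col u < col v"
  shows "k1 N E col x y u < k1 N E col x y v \<and> k1 N E col x y v < k2 N E col x y u
       \<and> k2 N E col x y u < k2 N E col x y v"
proof -
  have nxy: "\<not> (Sp E col x y \<and> ((u = x \<and> v = y) \<or> (u = y \<and> v = x)))"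
    using assms sym unfolding Sp_def by blast
  have "col u = 0 \<or> col u = 1 \<or> col u = 2" using c2 assms by (meson col_cases)
  moreover have "col v = 0 \<or> col v = 1 \<or> col v = 2" using c2 assms by (meson col_cases)
  moreover have "col x = 0 \<or> col x = 1 \<or> col x = 2" using c2 assms by (meson col_cases)
  moreover have "col y = 0 \<or> col y = 1 \<or> col y = 2" using c2 assms by (meson col_cases)
  ultimately show ?thesis using nxy assms(3-8)
    unfolding k1_def k2_def rk_def
    by (elim disjE; simp; auto simp: Sp_def)
qed




lemma claimB:
  assumes c2: "\<And>v. v < N \<Longrightarrow> col v \<le> 2"
    and "x < N" "y < N" "Sp E col x y"
  defines "a1 \<equiv> k1 N E col x y x" and "a2 \<equiv> k2 N E col x y x"
      and "b1 \<equiv> k1 N E col x y y" and "b2 \<equiv> k2 N E col x y y"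
  shows "a1 < a2 \<and> b1 < b2 \<and> a1 \<noteq> b1 \<and> a1 \<noteq> b2 \<and> a2 \<noteq> b1 \<and> a2 \<noteq> b2 \<and>
         \<not>(a1 < b1 \<and> b1 < a2 \<and> a2 < b2) \<and> \<not>(b1 < a1 \<and> a1 < b2 \<and> b2 < a2)"
proof -
  have xy: "x \<noteq> y" "col x \<le> col y" using assms(4) by (auto simp: Sp_def)
  have "col x = 0 \<or> col x = 1 \<or> col x = 2" using c2 assms by (meson col_cases)
  moreover have "col y = 0 \<or> col y = 1 \<or> col y = 2" using c2 assms by (meson col_cases)
  ultimately show ?thesis using xy assms(2-4)
    unfolding a1_def a2_def b1_def b2_def k1_def k2_def rk_def
    by (elim disjE; simp)
qed

lemma sort_bad:
  assumes "a1 < a2" "b1 < b2" "a1 \<noteq> b1" "a1 \<noteq> b2" "a2 \<noteq> b1" "a2 \<noteq> b2"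
   "\<not>(a1 < b1 \<and> b1 < a2 \<and> a2 < b2)" "\<not>(b1 < a1 \<and> a1 < b2 \<and> b2 < a2)"
  shows "map fst (sort_key snd [(u, a1::real), (v, b1), (u, a2), (v, b2)]) \<in>
    {[u,u,v,v],[v,v,u,u],[u,v,v,u],[v,u,u,v]}"
  using assms by (auto simp: not_less)

lemma bad_has_rep:
  assumes "l \<in> {[u,u,v,v],[v,v,u,u],[u,v,v,u],[v,u,u,v]}"
  shows "\<exists>i. Suc i < length l \<and> l ! i = l ! Suc i"
proof -
  have "l ! 1 = l ! 2 \<or> l ! 0 = l ! 1" using assms by auto
  moreover have "length l = 4" using assms by auto
  ultimately show ?thesis by (metis One_nat_def Suc_1 lessI numeral_2_eq_2 Suc_lessD  numeral_Bit0 add_2_eq_Suc' numerals(1) one_add_one zero_less_numeral)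
qed




lemma nth_concat_rep:
  "i < 4 * K \<Longrightarrow> concat (replicate K [s,t,s,t]) ! i = (if even i then s else t)"
proof (induction K arbitrary: i)
  case 0 then show ?case by simp
next
  case (Suc K)
  show ?case
  proof (cases "i < 4")
    case True
    then have "i = 0 \<or> i = 1 \<or> i = 2 \<or> i = 3" by auto
    then show ?thesis by (auto simp: nth_append)
  next
    case False
    then have "concat (replicate (Suc K) [s,t,s,t]) ! i = concat (replicate K [s,t,s,t]) ! (i - 4)"
      by (simp add: nth_append numeral_eq_Suc)
    moreover have "i - 4 < 4 * K" using Suc.prems False by auto
    moreover have "even (i - 4) = even i" using False by auto
    ultimately show ?thesis using Suc.IH by simp
  qed
qed

lemma alt_rep:
  assumes "filter (\<lambda>c. c = x \<or> c = y) w = concat (replicate K [s,t,s,t])" "s \<noteq> t"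
  shows "alternate w x y"
  unfolding alternate_def Let_def assms(1)
proof (intro allI impI)
  fix i assume "Suc i < length (concat (replicate K [s, t, s, t]))"
  then have "Suc i < 4 * K" by (simp add: length_concat sum_list_replicate)
  then show "concat (replicate K [s, t, s, t]) ! i \<noteq> concat (replicate K [s, t, s, t]) ! Suc i"
    using nth_concat_rep[of i K s t] nth_concat_rep[of "Suc i" K s t] assms(2) by auto
qed

lemma nonalt:
  assumes "filter (\<lambda>c. c = x \<or> c = y) w = pre @ seg @ post"
    and "Suc i < length seg" "seg ! i = seg ! Suc i"
  shows "\<not> alternate w x y"
  unfolding alternate_def Let_def assms(1)
proof
  assume H: "\<forall>j. Suc j < length (pre @ seg @ post) \<longrightarrow> (pre @ seg @ post) ! j \<noteq> (pre @ seg @ post) ! Suc j"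
  have "Suc (length pre + i) < length (pre @ seg @ post)" using assms(2) by simp
  with H have "(pre @ seg @ post) ! (length pre + i) \<noteq> (pre @ seg @ post) ! Suc (length pre + i)" by blast
  moreover have "(pre @ seg @ post) ! (length pre + i) = seg ! i" using assms(2) by (simp add: nth_append)
  moreover have "(pre @ seg @ post) ! Suc (length pre + i) = seg ! Suc i"
    using assms(2) by (metis add_Suc_right length_append nth_append_length_plus nth_append Suc_lessD)
  ultimately show False using assms(3) by simp
qed

lemma filter_sym: "filter (\<lambda>c. c = x \<or> c = y) w = filter (\<lambda>c. c = y \<or> c = x) w"
  by (metis disj_commute)

lemma alt_sym: "alternate w x y = alternate w y x"
  unfolding alternate_def filter_sym[of x y] ..


definition W :: "nat \<Rightarrow> (nat \<Rightarrow> nat \<Rightarrow> bool) \<Rightarrow> (nat \<Rightarrow> nat) \<Rightarrow> nat list" where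
  "W N E col = concat (map (\<lambda>p. piece N (k1 N E col (fst p) (snd p)) (k2 N E col (fst p) (snd p)))
     (List.product [0..<N] [0..<N]))"

lemma set_piece: "set (piece N f1 f2) = {0..<N}"
proof -
  have "fst ` ((\<lambda>v. (v, f v)) ` A) = A" for f :: "nat \<Rightarrow> real" and A
    by (simp add: image_image)
  then show ?thesis unfolding piece_def by (simp add: image_Un)
qed

lemma filter_W_piece:
  assumes "x \<noteq> y" "x < N" "y < N"
  shows "filter (\<lambda>c. c = x \<or> c = y) (W N E col) =
    concat (map (\<lambda>p. map fst (sort_key snd
      [(min x y, k1 N E col (fst p) (snd p) (min x y)), (max x y, k1 N E col (fst p) (snd p) (max x y)),
       (min x y, k2 N E col (fst p) (snd p) (min x y)), (max x y, k2 N E col (fst p) (snd p) (max x y))]))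
     (List.product [0..<N] [0..<N]))"
proof -
  have P: "(\<lambda>c. c = x \<or> c = y) = (\<lambda>c. c = min x y \<or> c = max x y)"
    using assms by (auto simp: min_def max_def)
  have mM: "min x y < max x y" "max x y < N" using assms by auto
  show ?thesis unfolding W_def P filter_concat map_map comp_def
    by (rule arg_cong[where f=concat], rule map_cong[OF refl], rule filter_piece[OF mM])
qed

lemma three_col_wr:
  fixes N :: nat and E :: "nat \<Rightarrow> nat \<Rightarrow> bool" and col :: "nat \<Rightarrow> nat"
  assumes N: "0 < N"
    and sym: "\<And>x y. E x y \<Longrightarrow> E y x"
    and c2: "\<And>v. v < N \<Longrightarrow> col v \<le> 2"
    and proper: "\<And>u v. u < N \<Longrightarrow> v < N \<Longrightarrow> u \<noteq> v \<Longrightarrow> E u v \<Longrightarrow> col u \<noteq> col v"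
  shows "word_representable {0..<N} E"
  unfolding word_representable_def
proof (rule exI[of _ "W N E col"], intro conjI ballI impI)
  show "set (W N E col) = {0..<N}"
  proof -
    have "(0,0) \<in> set (List.product [0..<N] [0..<N])" using N by simp
    then show ?thesis unfolding W_def by (auto simp: set_piece)
  qed
  fix x y assume x: "x \<in> {0..<N}" and y: "y \<in> {0..<N}" and xy: "x \<noteq> y"
  let ?PS = "List.product [0..<N] [0..<N]"
  have xN: "x < N" and yN: "y < N" using x y by auto
  show "E x y = alternate (W N E col) x y"
  proof
    assume Exy: "E x y"
    obtain s t where st: "(s = x \<and> t = y) \<or> (s = y \<and> t = x)" and Est: "E s t" and cst: "col s < col t"
    proof (cases "col x < col y")
      case True then show ?thesis using that Exy by blast
    next
      case False
      then have "col y < col x" using proper[OF xN yN xy Exy] by simp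
      then show ?thesis using that sym[OF Exy] by blast
    qed
    have sN: "s < N" and tN: "t < N" and stne: "s \<noteq> t" using st xN yN xy by auto
    have each: "map fst (sort_key snd
      [(min s t, k1 N E col (fst p) (snd p) (min s t)), (max s t, k1 N E col (fst p) (snd p) (max s t)),
       (min s t, k2 N E col (fst p) (snd p) (min s t)), (max s t, k2 N E col (fst p) (snd p) (max s t))]) = [s,t,s,t]"
      if "p \<in> set ?PS" for p
    proof -
      have pN: "fst p < N" "snd p < N" using that by auto
      note A = claimA[of E N col, OF sym c2 sN tN pN Est cst]
      show ?thesis
      proof (cases "s < t")
        case True
        then have mm: "min s t = s" "max s t = t" by auto
        show ?thesis unfolding mm by (rule sort_interleave) (use A in auto)
      next
        case False
        then have "t < s" using stne by auto
        then have mm: "min s t = t" "max s t = s" by auto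
        show ?thesis unfolding mm by (rule sort_interleave') (use A in auto)
      qed
    qed
    have "filter (\<lambda>c. c = s \<or> c = t) (W N E col) = concat (map (\<lambda>p. [s,t,s,t]) ?PS)"
      unfolding filter_W_piece[OF stne sN tN] by (rule arg_cong[where f=concat], rule map_cong[OF refl], rule each)
    also have "\<dots> = concat (replicate (length ?PS) [s,t,s,t])" by (simp only: map_replicate_const)
    finally have alst: "alternate (W N E col) s t" by (rule alt_rep[OF _ stne])
    from st show "alternate (W N E col) x y"
    proof
      assume "s = x \<and> t = y" then show ?thesis using alst by simp
    next
      assume "s = y \<and> t = x" then show ?thesis using alst alt_sym[of "W N E col" y x] by simp
    qed
  next
    assume alt: "alternate (W N E col) x y"
    show "E x y"
    proof (rule ccontr)
      assume nE: "\<not> E x y"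
      obtain s t where st: "(s = x \<and> t = y) \<or> (s = y \<and> t = x)" and S: "Sp E col s t"
      proof (cases "col x \<le> col y")
        case True then show ?thesis using that nE xy unfolding Sp_def by blast
      next
        case False
        have "\<not> E y x" using nE sym by blast
        then show ?thesis using that[of y x] False xy unfolding Sp_def by auto
      qed
      have sN: "s < N" and tN: "t < N" and stne: "s \<noteq> t" using st xN yN xy by auto
      have mem: "(s,t) \<in> set ?PS" using sN tN by simp
      then obtain pre post where spl: "?PS = pre @ (s,t) # post" by (meson split_list)
      define f where "f = (\<lambda>p. map fst (sort_key snd
      [(min s t, k1 N E col (fst p) (snd p) (min s t)), (max s t, k1 N E col (fst p) (snd p) (max s t)),
       (min s t, k2 N E col (fst p) (snd p) (min s t)), (max s t, k2 N E col (fst p) (snd p) (max s t))]))"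
      have F0: "filter (\<lambda>c. c = s \<or> c = t) (W N E col) = concat (map f ?PS)"
        unfolding f_def by (rule filter_W_piece[OF stne sN tN])
      have F: "filter (\<lambda>c. c = s \<or> c = t) (W N E col) = concat (map f pre) @ f (s,t) @ concat (map f post)"
        unfolding F0 spl by (simp only: map_append list.map concat_append concat.simps)
      note B = claimB[of N col, OF c2 sN tN S]
      have bad: "\<exists>i. Suc i < length (f (s,t)) \<and> f (s,t) ! i = f (s,t) ! Suc i"
      proof (cases "s < t")
        case True
        then have mm: "min s t = s" "max s t = t" by auto
        have "f (s,t) \<in> {[s,s,t,t],[t,t,s,s],[s,t,t,s],[t,s,s,t]}"
          unfolding f_def mm fst_conv snd_conv by (rule sort_bad) (use B in auto)
        then show ?thesis by (rule bad_has_rep)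
      next
        case False
        then have "t < s" using stne by auto
        then have mm: "min s t = t" "max s t = s" by auto
        have "f (s,t) \<in> {[t,t,s,s],[s,s,t,t],[t,s,s,t],[s,t,t,s]}"
          unfolding f_def mm fst_conv snd_conv by (rule sort_bad) (use B in auto)
        then show ?thesis by (rule bad_has_rep)
      qed
      then obtain i where "Suc i < length (f (s,t))" "f (s,t) ! i = f (s,t) ! Suc i" by blast
      from nonalt[OF F this] have "\<not> alternate (W N E col) s t" .
      then have "\<not> alternate (W N E col) x y" using st alt_sym[of "W N E col" y x] by auto
      then show False using alt by simp
    qed
  qed
qed




lemma no_small:
  fixes N L s t :: int
  assumes "L \<le> s" "s \<le> N - L" "\<bar>t\<bar> < L" "N dvd (t - s) \<or> N dvd (t + s)"
  shows False
proof -
  have N: "N > 0" using assms by linarith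
  have neg: False if dv: "N dvd x" and lo: "-N < x" and hi: "x < 0" for x
  proof -
    obtain k where k: "x = N * k" using dv by (elim dvdE)
    show False
    proof (cases "k \<ge> 0")
      case True then have "N * k \<ge> 0" using N by simp
      then show False using k lo hi by linarith
    next
      case False then have "k \<le> -1" by simp
      then have "N * k \<le> N * (-1)" using N by (intro mult_left_mono) auto
      then show False using k lo hi by linarith
    qed
  qed
  show False
  proof (cases "N dvd (t - s)")
    case True then show False using neg[of "t - s"] assms by linarith
  next
    case False
    then have "N dvd (t + s)" using assms(4) by simp
    then have "N dvd (- (t + s))" by (simp only: dvd_minus_iff)
    then show False using neg[of "- (t + s)"] assms by linarith
  qed
qed

lemma same_div_close:
  fixes x y L :: nat
  assumes "x div L = y div L" "0 < L"
  shows "\<bar>int x - int y\<bar> < int L"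
proof -
  define c where "c = x div L"
  have hx: "int x = int L * int c + int (x mod L)" unfolding c_def
    by (metis div_mult_mod_eq mult.commute of_nat_add of_nat_mult)
  have hy: "int y = int L * int c + int (y mod L)" unfolding c_def assms(1)
    by (metis div_mult_mod_eq mult.commute of_nat_add of_nat_mult)
  have "x mod L < L" "y mod L < L" using assms by simp_all
  then show ?thesis using hx hy by linarith
qed




lemma adj_cong:
  fixes N u v :: nat
  assumes "u < N" "v < N" "circ_adj N S u v"
  shows "\<exists>s\<in>S. int N dvd (int u - int v - int s) \<or> int N dvd (int u - int v + int s)"
proof -
  define d where "d = nat \<bar>int u - int v\<bar>"
  have dS: "min d (N - d) \<in> S" using assms(3) unfolding circ_adj_def d_def Let_def by simp
  have dN: "d < N" using assms(1,2) unfolding d_def by linarith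
  have D: "int u - int v = int d \<or> int u - int v = - int d" unfolding d_def by linarith
  show ?thesis
  proof (cases "d \<le> N - d")
    case True
    then have "min d (N - d) = d" by simp
    then have dS': "d \<in> S" using dS by simp
    have "int N dvd (int u - int v - int d) \<or> int N dvd (int u - int v + int d)"
      using D by auto
    then show ?thesis using dS' by blast
  next
    case False
    then have m: "min d (N - d) = N - d" by simp
    have "int (N - d) = int N - int d" using dN by simp
    then have "int N dvd (int u - int v - int (N - d)) \<or> int N dvd (int u - int v + int (N - d))"
    proof (cases "int u - int v = int d")
      case True
      then have "int u - int v + int (N - d) = int N" using \<open>int (N - d) = int N - int d\<close> by simp
      then show ?thesis by simp
    next
      case False
      then have "int u - int v - int (N - d) = - int N" using D \<open>int (N - d) = int N - int d\<close> by simp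
      then show ?thesis by simp
    qed
    moreover have "N - d \<in> S" using dS m by simp
    ultimately show ?thesis by blast
  qed
qed


theorem theorem19:
  fixes n a b :: nat
  assumes "0 < n" and "0 < a" and "a < n" and "0 < b" and "b < n" and "a \<noteq> b"
    and "\<exists>g p q. g < 2 * n \<and> coprime g (2 * n) \<and> p < 2 * n \<and> q < 2 * n \<and>
           [p * g = a] (mod 2 * n) \<and> [q * g = b] (mod 2 * n) \<and>
           of_int \<lceil>2 * real n / 3\<rceil> \<le> real (min (min p q) (min (2 * n - p) (2 * n - q)))"
  shows "word_representable (circ_vertices (2 * n)) (circ_adj (2 * n) {a, b, n})"
proof -
  obtain g p q where g: "g < 2 * n" "coprime g (2 * n)" and pq: "p < 2 * n" "q < 2 * n"
    and cp: "[p * g = a] (mod 2 * n)" and cq: "[q * g = b] (mod 2 * n)"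
    and r: "of_int \<lceil>2 * real n / 3\<rceil> \<le> real (min (min p q) (min (2 * n - p) (2 * n - q)))"
    using assms(7) by blast
  define N where "N = 2 * n"
  define L where "L = nat \<lceil>2 * real n / 3\<rceil>"
  have c0: "\<lceil>2 * real n / 3\<rceil> \<ge> 0" by simp
  have Lr: "real L = of_int \<lceil>2 * real n / 3\<rceil>" unfolding L_def using c0 by simp
  have "2 * real n / 3 \<le> real L" using Lr by linarith
  then have L3: "N \<le> 3 * L" unfolding N_def by linarith
  have "\<lceil>2 * real n / 3\<rceil> \<le> int n" by (simp add: ceiling_le_iff)
  then have Ln: "L \<le> n" unfolding L_def by linarith
  have Lpos: "0 < L" using L3 assms(1) unfolding N_def by linarith
  have rL: "real L \<le> real (min (min p q) (min (2 * n - p) (2 * n - q)))" using r Lr by simp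
  then have Lp: "L \<le> p" "L \<le> q" "L \<le> N - p" "L \<le> N - q" unfolding N_def by linarith+
  obtain h where h: "[g * h = Suc 0] (mod N)" using cong_solve_coprime_nat g(2) unfolding N_def by blast
  have hd: "int N dvd (int g * int h - 1)"
  proof -
    have "[int (g * h) = int (Suc 0)] (mod int N)" using h by (simp only: cong_int_iff)
    then have "int N dvd (int (g * h) - int (Suc 0))" by (simp only: cong_iff_dvd_diff)
    then show ?thesis by simp
  qed
  have pd: "int N dvd (int p * int g - int a)"
  proof -
    have "[int (p * g) = int a] (mod int N)" using cp unfolding N_def by (simp only: cong_int_iff)
    then have "int N dvd (int (p * g) - int a)" by (simp only: cong_iff_dvd_diff)
    then show ?thesis by simp
  qed
  have qd: "int N dvd (int q * int g - int b)"
  proof -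
    have "[int (q * g) = int b] (mod int N)" using cq unfolding N_def by (simp only: cong_int_iff)
    then have "int N dvd (int (q * g) - int b)" by (simp only: cong_iff_dvd_diff)
    then show ?thesis by simp
  qed
  have ap: "int N dvd (int a * int h - int p)"
  proof -
    have "int a * int h - int p = int p * (int g * int h - 1) - (int p * int g - int a) * int h"
      by (simp add: algebra_simps)
    then show ?thesis using hd pd by (simp add: dvd_diff dvd_mult dvd_mult2)
  qed
  have bq: "int N dvd (int b * int h - int q)"
  proof -
    have "int b * int h - int q = int q * (int g * int h - 1) - (int q * int g - int b) * int h"
      by (simp add: algebra_simps)
    then show ?thesis using hd qd by (simp add: dvd_diff dvd_mult dvd_mult2)
  qed
  have nn: "int N dvd (int n * int h - int n)"
  proof -
    have "(2::int) dvd int N" unfolding N_def by simp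
    then have "(2::int) dvd (int g * int h - 1)" using hd dvd_trans by blast
    then have "odd (int g * int h)" by simp
    then have "odd (int h)" by simp
    then obtain j where j: "int h = 2 * j + 1" by (metis oddE)
    have "int n * int h - int n = int N * j" unfolding N_def j by (simp add: algebra_simps)
    then show ?thesis by simp
  qed
  have key: "\<exists>s'. int L \<le> int s' \<and> int s' \<le> int N - int L \<and> int N dvd (int s * int h - int s')"
    if "s \<in> {a, b, n}" for s
  proof -
    have "s = a \<or> s = b \<or> s = n" using that by simp
    then show ?thesis
    proof (elim disjE)
      assume "s = a" then show ?thesis using ap Lp pq unfolding N_def by (intro exI[of _ p]) auto
    next
      assume "s = b" then show ?thesis using bq Lp pq unfolding N_def by (intro exI[of _ q]) auto
    next
      assume "s = n" then show ?thesis using nn Ln unfolding N_def by (intro exI[of _ n]) auto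
    qed
  qed
  define col where "col v = ((v * h) mod N) div L" for v
  have "word_representable {0..<N} (circ_adj N {a, b, n})"
  proof (rule three_col_wr[where col = col])
    show "0 < N" unfolding N_def using assms(1) by simp
    show "circ_adj N {a, b, n} y x" if "circ_adj N {a, b, n} x y" for x y
      using that unfolding circ_adj_def Let_def by (simp add: abs_minus_commute)
    show "col v \<le> 2" if "v < N" for v
    proof -
      have "(v * h) mod N < N" using \<open>0 < N\<close> by simp
      then have "(v * h) mod N < 3 * L" using L3 by linarith
      then have "(v * h) mod N div L < 3" using Lpos by (simp add: div_less_iff_less_mult mult.commute)
      then show ?thesis unfolding col_def by simp
    qed
    show "col u \<noteq> col v" if uv: "u < N" "v < N" "u \<noteq> v" "circ_adj N {a, b, n} u v" for u v
    proof
      assume same: "col u = col v"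
      obtain s where s: "s \<in> {a, b, n}" and sd: "int N dvd (int u - int v - int s) \<or> int N dvd (int u - int v + int s)"
        using adj_cong[OF uv(1,2,4)] by blast
      obtain s' where s': "int L \<le> int s'" "int s' \<le> int N - int L" "int N dvd (int s * int h - int s')"
        using key[OF s] by blast
      define ku where "ku = (u * h) mod N"
      define kv where "kv = (v * h) mod N"
      have close: "\<bar>int ku - int kv\<bar> < int L"
        using same_div_close[OF _ Lpos] same unfolding col_def ku_def kv_def by blast
      have modu: "int N dvd (int ku - int u * int h)"
      proof -
        have e: "(u * h) div N * N + (u * h) mod N = u * h" by (rule div_mult_mod_eq)
        have "int ((u * h) div N * N + (u * h) mod N) = int (u * h)" using e by (rule arg_cong)
        then have "int ((u * h) div N) * int N + int ku = int u * int h" unfolding ku_def by (simp only: of_nat_add of_nat_mult)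
        then have "int ku - int u * int h = int N * (- int ((u * h) div N))" by (simp add: algebra_simps)
        then show ?thesis by (rule dvdI)
      qed
      have modv: "int N dvd (int kv - int v * int h)"
      proof -
        have e: "(v * h) div N * N + (v * h) mod N = v * h" by (rule div_mult_mod_eq)
        have "int ((v * h) div N * N + (v * h) mod N) = int (v * h)" using e by (rule arg_cong)
        then have "int ((v * h) div N) * int N + int kv = int v * int h" unfolding kv_def by (simp only: of_nat_add of_nat_mult)
        then have "int kv - int v * int h = int N * (- int ((v * h) div N))" by (simp add: algebra_simps)
        then show ?thesis by (rule dvdI)
      qed
      have "int N dvd ((int ku - int kv) - int s') \<or> int N dvd ((int ku - int kv) + int s')"
      proof (cases "int N dvd (int u - int v - int s)")
        case True
        have eq: "(int ku - int kv) - int s' = (int ku - int u * int h) - (int kv - int v * int h)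
             + (int u - int v - int s) * int h + (int s * int h - int s')"
          by (simp add: algebra_simps)
        have dv: "int N dvd ((int ku - int u * int h) - (int kv - int v * int h)
             + (int u - int v - int s) * int h + (int s * int h - int s'))"
          by (rule dvd_add[OF dvd_add[OF dvd_diff[OF modu modv] dvd_mult2[OF True]] s'(3)])
        have "int N dvd ((int ku - int kv) - int s')" unfolding eq by (rule dv)
        then show ?thesis by (rule disjI1)
      next
        case False
        then have F: "int N dvd (int u - int v + int s)" using sd by blast
        have eq: "(int ku - int kv) + int s' = (int ku - int u * int h) - (int kv - int v * int h)
             + (int u - int v + int s) * int h - (int s * int h - int s')"
          by (simp add: algebra_simps)
        have dv: "int N dvd ((int ku - int u * int h) - (int kv - int v * int h)
             + (int u - int v + int s) * int h - (int s * int h - int s'))"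
          by (rule dvd_diff[OF dvd_add[OF dvd_diff[OF modu modv] dvd_mult2[OF F]] s'(3)])
        have "int N dvd ((int ku - int kv) + int s')" unfolding eq by (rule dv)
        then show ?thesis by (rule disjI2)
      qed
      then show False using no_small[OF s'(1,2) close] by blast
    qed
  qed
  then show ?thesis unfolding circ_vertices_def N_def .
qed


end
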